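(* Every point $(X_1,X_2,A)\in\mathbb C^2\times\mathbb R$ satisfying $$-2\,\mathrm{Re}(X_1+X_2)-2\,\mathrm{Re}\bigl(X_1\overline{X}_2e^{-2iA}\bigr)+|X_1|^2+|X_2|^2+1=0$$ with $-\pi/2<A<\pi/2$ satisfies $\mathrm{Re}(X_1e^{-iA})\ge0$. *)

theory Defs
  imports Complex_Main
begin

end

theory Submission
  imports Defs
begin

theorem proposition3p10:
  fixes X1 X2 :: complex and A :: real
  assumes "- 2 * Re (X1 + X2) - 2 * Re (X1 * cnj X2 * exp (- 2 * \<i> * complex_of_real A))
             + (cmod X1)\<^sup>2 + (cmod X2)\<^sup>2 + 1 = 0"
    and "- (pi / 2) < A" and "A < pi / 2"
  shows "Re (X1 * exp (- \<i> * complex_of_real A)) \<ge> 0"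
proof -
  define c where "c = cos A"
  define s where "s = sin A"
  obtain x1 y1 where X1: "X1 = Complex x1 y1" by (cases X1)
  obtain x2 y2 where X2: "X2 = Complex x2 y2" by (cases X2)
  have cs: "c^2 + s^2 = 1" unfolding c_def s_def by simp
  have cpos: "c > 0" unfolding c_def using assms(2,3) by (simp add: cos_gt_zero_pi)
  have e1: "exp (- \<i> * complex_of_real A) = Complex c (- s)"
    unfolding c_def s_def by (simp add: complex_eq_iff exp_of_real cis_conv_exp[symmetric] Re_exp Im_exp)
  have e2: "exp (- 2 * \<i> * complex_of_real A) = Complex (c^2 - s^2) (- 2*c*s)"
    unfolding c_def s_def by (simp add: complex_eq_iff Re_exp Im_exp cos_double sin_double power2_eq_square)
  have m1: "(cmod X1)\<^sup>2 = x1^2 + y1^2" unfolding X1 by (simp add: cmod_def)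
  have m2: "(cmod X2)\<^sup>2 = x2^2 + y2^2" unfolding X2 by (simp add: cmod_def)
  have H: "- 2 * (x1 + x2) - 2 * ((x1*x2 + y1*y2)*(c^2 - s^2) - (y1*x2 - x1*y2)*(- 2*c*s))
             + x1^2 + y1^2 + x2^2 + y2^2 + 1 = 0"
    using assms(1) unfolding e2 m1 m2 unfolding X1 X2 by (simp add: algebra_simps)
  define a where "a = x1*c + y1*s"
  define b where "b = y1*c - x1*s"
  define cc where "cc = x2*c - y2*s"
  define d where "d = y2*c + x2*s"
  have key: "(b - d + s)^2 + (a - cc + c)^2 = 4*c*a"
  proof -
    have "(b - d + s)^2 + (a - cc + c)^2 - 4*c*a
       = (c^2+s^2) * (x1^2 + y1^2 + x2^2 + y2^2 - 2*x1 - 2*x2 + 1)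
          - 2 * ((x1*x2 + y1*y2)*(c^2 - s^2) - (y1*x2 - x1*y2)*(- 2*c*s))"
      unfolding a_def b_def cc_def d_def by (simp add: algebra_simps power2_eq_square)
    also have "\<dots> = 0" using H cs by (simp add: algebra_simps)
    finally show ?thesis by simp
  qed
  have "a \<ge> 0"
  proof -
    have "4*c*a \<ge> 0" using key by (metis add_nonneg_nonneg zero_le_power2)
    thus ?thesis using cpos by (simp add: zero_le_mult_iff)
  qed
  thus ?thesis unfolding e1 X1 a_def by simp
qed

end
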